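(* Let $B>0$ and $z>0$, and set $z_0:=\max\left(z,\ \frac{\pi}{B^2 e}\right)$. If $\nu\geq 1$ satisfies $$\nu\;\geq\;\frac12+\frac{\log(B)+z_0-\frac12\log\!\left(\frac{\pi}{z_0 e}\right)}{W_0\!\left(\frac{2}{z_0 e}\left(\log(B)+z_0-\frac12\log\!\left(\frac{\pi}{z_0 e}\right)\right)\right)},$$ then $K_\nu(z)>B$.
   Context: $K_\nu$ denotes the modified Bessel function of the second kind of real order $\nu$, considered for real argument $z>0$. $W_0$ denotes the principal branch of the Lambert $W$ function (the inverse of $w\mapsto we^w$ on $[-1,\infty)$). *)

theory Defs
  imports "HOL-Analysis.Analysis"
begin

text \<open>Modified Bessel function of the second kind, real order nu, real argument z > 0,
  via the standard integral representation (DLMF 10.32.9):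
  K_nu(z) = integral over t from 0 to infinity of exp(-z cosh t) cosh(nu t).\<close>
definition besselK :: "real \<Rightarrow> real \<Rightarrow> real" where
  "besselK nu z = integral {0..} (\<lambda>t. exp (- z * cosh t) * cosh (nu * t))"

definition lambertW0 :: "real \<Rightarrow> real" where
  "lambertW0 x = (THE w. w \<ge> -1 \<and> w * exp w = x)"

end

theory Submission imports Defs begin

lemma cosh_ge_half_exp: "exp t / 2 \<le> cosh (t::real)"
  unfolding cosh_def by (simp add: divide_right_mono)

lemma integrand_bound:
  fixes z nu t :: real
  assumes z: "z > 0" and nu: "nu \<ge> 0" and t: "t \<ge> 0"
  shows "\<bar>exp (- z * cosh t) * cosh (nu * t)\<bar> \<le> exp ((nu+1)^2/z) * exp (- 1 * t)"
proof -
  have c1: "cosh (nu*t) \<le> exp (nu*t)" unfolding cosh_def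
    using nu t by (simp add: field_simps)
  have "1 + t + t^2/2 \<le> exp t" using exp_lower_Taylor_quadratic t by simp
  hence "t^2/4 \<le> cosh t" using cosh_ge_half_exp[of t] t by linarith
  hence A: "z*z*(t^2/4) \<le> z*z*cosh t" using z by (simp add: mult_left_mono)
  have eq: "(z*t/2 - (nu+1))^2 = z*z*(t^2/4) - z*t*(nu+1) + (nu+1)^2"
    by (simp add: power2_eq_square field_simps)
  have sq: "0 \<le> z*z*(t^2/4) - z*t*(nu+1) + (nu+1)^2" by (simp only: eq[symmetric] zero_le_power2)
  have e1: "z*((nu+1)^2/z - t) = (nu+1)^2 - z*t" using z by (simp add: field_simps)
  have e2: "z*(nu*t - z*cosh t) = z*t*(nu+1) - z*t - z*z*cosh t" by (simp add: algebra_simps)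
  have "z*(nu*t - z*cosh t) \<le> z*((nu+1)^2/z - t)"
    unfolding e1 e2 using A sq by linarith
  hence "nu*t - z*cosh t \<le> (nu+1)^2/z - t"
    using z by (simp add: mult_le_cancel_left_pos)
  hence P1: "exp (- z * cosh t) * exp (nu*t) \<le> exp ((nu+1)^2/z) * exp (- 1 * t)"
    by (simp flip: exp_add)
  have P2: "exp (- z * cosh t) * cosh (nu * t) \<le> exp (- z * cosh t) * exp (nu*t)"
    using c1 by (intro mult_left_mono) auto
  have P3: "0 \<le> exp (- z * cosh t) * cosh (nu * t)" by simp
  show ?thesis unfolding abs_of_nonneg[OF P3] using P1 P2 by linarith
qed

lemma integrand_integrable:
  fixes z nu :: real
  assumes z: "z > 0" and nu: "nu \<ge> 0"
  shows "(\<lambda>t. exp (- z * cosh t) * cosh (nu * t)) integrable_on {0..}"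
proof (rule measurable_bounded_by_integrable_imp_integrable_real)
  show "(\<lambda>t. exp (- z * cosh t) * cosh (nu * t)) \<in> borel_measurable (lebesgue_on {0..})"
    by (intro continuous_imp_measurable_on_sets_lebesgue continuous_intros) auto
  show "(\<lambda>t. exp ((nu+1)^2/z) * exp (- 1 * t)) integrable_on {0..}"
    by (intro integrable_on_mult_right integrable_on_exp_minus_to_infinity) auto
  show "\<And>x. x \<in> {0..} \<Longrightarrow> \<bar>exp (- z * cosh x) * cosh (nu * x)\<bar> \<le> exp ((nu+1)^2/z) * exp (- 1 * x)"
    using integrand_bound[OF z nu] by auto
qed auto

lemma ftc_lower:
  fixes G g W :: "real \<Rightarrow> real"
  assumes ab: "a \<le> b"
    and der: "\<And>x. x \<in> {a..b} \<Longrightarrow> (G has_real_derivative g x) (at x within {a..b})"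
    and le: "\<And>x. x \<in> {a..b} \<Longrightarrow> g x \<le> W x"
    and cW: "continuous_on {a..b} W"
  shows "G b - G a \<le> integral {a..b} W"
proof -
  have "(g has_integral (G b - G a)) {a..b}"
    using ab der by (intro fundamental_theorem_of_calculus) (auto simp: has_real_derivative_iff_has_vector_derivative)
  moreover have "(W has_integral integral {a..b} W) {a..b}"
    using cW integrable_continuous_real by blast
  ultimately show ?thesis using le by (rule has_integral_le)
qed

lemma left_part:
  fixes nu a :: real
  assumes nu: "nu \<ge> 1" and a: "a > 0" and T: "0 \<le> T" "a * exp T = nu"
  defines "W \<equiv> \<lambda>t. exp (nu*t - a*exp t)"
  shows "W T / sqrt nu - W 0 / (nu - a + sqrt nu) \<le> integral {0..T} W"
proof -
  define s where "s = sqrt nu"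
  have s1: "s \<ge> 1" using nu by (simp add: s_def)
  have ss: "s^2 = nu" using nu by (simp add: s_def)
  define D where "D = (\<lambda>t. nu - a*exp t + s)"
  define G where "G = (\<lambda>t. W t / D t)"
  define g where "g = (\<lambda>t. W t * ((nu - a*exp t) * D t + a*exp t) / (D t)^2)"
  have Dpos: "D t > 0" if "t \<in> {0..T}" for t
  proof -
    have "a * exp t \<le> a * exp T" using that a by auto
    thus ?thesis using T s1 unfolding D_def by linarith
  qed
  have der: "(G has_real_derivative g t) (at t within {0..T})" if "t \<in> {0..T}" for t
  proof -
    have "D t \<noteq> 0" using Dpos[OF that] by simp
    have "((\<lambda>t. exp (nu*t - a*exp t) / (nu - a*exp t + s)) has_real_derivative
       ((exp (nu*t - a*exp t) * (nu * 1 - a * exp t)) * (nu - a*exp t + s) - exp (nu*t - a*exp t) * (0 - a * exp t)) / (nu - a*exp t + s)^2) (at t within {0..T})"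
      using \<open>D t \<noteq> 0\<close> unfolding D_def
      by (intro derivative_eq_intros DERIV_divide[THEN DERIV_cong]) (auto simp: power2_eq_square)
    then show ?thesis unfolding G_def g_def W_def D_def
      by (simp add: field_simps power2_eq_square)
  qed
  have le: "g t \<le> W t" if "t \<in> {0..T}" for t
  proof -
    define p where "p = nu - a * exp t"
    have p0: "p \<ge> 0" using that a T unfolding p_def by (smt (verit) atLeastAtMost_iff exp_le_cancel_iff mult_left_mono)
    have Dp: "D t = p + s" unfolding D_def p_def by simp
    have ae: "a*exp t = nu - p" by (simp add: p_def)
    have sq: "(p+s)^2 = p*(p+s) + p* s + s^2" by (simp add: power2_eq_square algebra_simps)
    have "0 \<le> p* s" using p0 s1 by simp
    hence "p*(p+s) + a*exp t \<le> (p+s)^2" unfolding ae sq ss using p0 by linarith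
    hence "((nu - a*exp t) * D t + a*exp t) / (D t)^2 \<le> 1"
      using Dpos[OF that] unfolding Dp p_def[symmetric] by (simp add: divide_le_eq)
    hence "W t * (((nu - a*exp t) * D t + a*exp t) / (D t)^2) \<le> W t * 1"
      by (intro mult_left_mono) (auto simp: W_def)
    thus ?thesis unfolding g_def by simp
  qed
  have cW: "continuous_on {0..T} W" unfolding W_def by (intro continuous_intros)
  have "G T - G 0 \<le> integral {0..T} W" by (rule ftc_lower[OF T(1) der le cW])
  moreover have "G T \<ge> W T / s"
  proof -
    have "D T = s" using T unfolding D_def by simp
    thus ?thesis unfolding G_def by simp
  qed
  moreover have "G 0 = W 0 / (nu - a + s)" unfolding G_def D_def by simp
  ultimately show ?thesis unfolding s_def by linarith
qed

lemma right_part: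
  fixes nu a :: real
  assumes nu: "nu \<ge> 1" and a: "a > 0" and T: "T \<le> U" "a * exp T = nu"
  defines "W \<equiv> \<lambda>t. exp (nu*t - a*exp t)"
  shows "W T / sqrt nu - W U / (a * exp U - nu + sqrt nu) \<le> integral {T..U} W"
proof -
  define s where "s = sqrt nu"
  have s1: "s \<ge> 1" using nu by (simp add: s_def)
  have ss: "s^2 = nu" using nu by (simp add: s_def)
  define D where "D = (\<lambda>t. a*exp t - nu + s)"
  define G where "G = (\<lambda>t. - (W t / D t))"
  define g where "g = (\<lambda>t. W t * ((a*exp t - nu) * D t + a*exp t) / (D t)^2)"
  have q0: "a*exp t - nu \<ge> 0" if "t \<in> {T..U}" for t
  proof -
    have "a * exp T \<le> a * exp t" using that a by auto
    thus ?thesis using T by linarith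
  qed
  have Dpos: "D t > 0" if "t \<in> {T..U}" for t
    using q0[OF that] s1 unfolding D_def by linarith
  have der: "(G has_real_derivative g t) (at t within {T..U})" if "t \<in> {T..U}" for t
  proof -
    have "D t \<noteq> 0" using Dpos[OF that] by simp
    have "((\<lambda>t. exp (nu*t - a*exp t) / (a*exp t - nu + s)) has_real_derivative
       ((exp (nu*t - a*exp t) * (nu * 1 - a * exp t)) * (a*exp t - nu + s) - exp (nu*t - a*exp t) * (a * exp t - 0 + 0)) / (a*exp t - nu + s)^2) (at t within {T..U})"
      using \<open>D t \<noteq> 0\<close> unfolding D_def
      by (intro derivative_eq_intros DERIV_divide[THEN DERIV_cong]) (auto simp: power2_eq_square)
    hence "((\<lambda>t. - (exp (nu*t - a*exp t) / (a*exp t - nu + s))) has_real_derivative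
       - (((exp (nu*t - a*exp t) * (nu * 1 - a * exp t)) * (a*exp t - nu + s) - exp (nu*t - a*exp t) * (a * exp t - 0 + 0)) / (a*exp t - nu + s)^2)) (at t within {T..U})"
      by (rule DERIV_minus)
    then show ?thesis unfolding G_def W_def D_def
      by (rule DERIV_cong) (unfold g_def W_def D_def, simp add: algebra_simps diff_divide_distrib add_divide_distrib)
  qed
  have le: "g t \<le> W t" if "t \<in> {T..U}" for t
  proof -
    define p where "p = a * exp t - nu"
    have p0: "p \<ge> 0" using q0[OF that] unfolding p_def .
    have Dp: "D t = p + s" unfolding D_def p_def by simp
    have ae: "a*exp t = nu + p" by (simp add: p_def)
    have sq: "(p+s)^2 = p*(p+s) + p * s + s^2" by (simp add: power2_eq_square algebra_simps)
    have "p \<le> p * s" using p0 s1 by (simp add: mult_le_cancel_left1)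
    hence "p*(p+s) + a*exp t \<le> (p+s)^2" unfolding ae sq ss using p0 by linarith
    hence "((a*exp t - nu) * D t + a*exp t) / (D t)^2 \<le> 1"
      using Dpos[OF that] unfolding Dp p_def[symmetric] by (simp add: divide_le_eq)
    hence "W t * (((a*exp t - nu) * D t + a*exp t) / (D t)^2) \<le> W t * 1"
      by (intro mult_left_mono) (auto simp: W_def)
    thus ?thesis unfolding g_def by simp
  qed
  have cW: "continuous_on {T..U} W" unfolding W_def by (intro continuous_intros)
  have "G U - G T \<le> integral {T..U} W" by (rule ftc_lower[OF T(1) der le cW])
  moreover have "G T = - (W T / s)"
  proof -
    have "D T = s" using T unfolding D_def by simp
    thus ?thesis unfolding G_def by simp
  qed
  moreover have "G U = - (W U / (a * exp U - nu + s))" unfolding G_def D_def by simp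
  ultimately show ?thesis unfolding s_def by linarith
qed

lemma pointwise_lower:
  fixes a nu t :: real
  assumes a: "a > 0" and nu: "nu \<ge> 0" and t: "t \<ge> 0"
  shows "exp (-a) / 2 * exp (nu*t - a*exp t) \<le> exp (- (2*a) * cosh t) * cosh (nu * t)"
proof -
  have c1: "exp (nu*t) / 2 \<le> cosh (nu*t)" by (rule cosh_ge_half_exp)
  have "exp (-t) \<le> 1" using t by simp
  hence "a * exp (-t) \<le> a" using a by (simp add: mult_left_le)
  hence "- a - a*exp t \<le> - (2*a) * cosh t" unfolding cosh_def by (simp add: field_simps)
  hence "exp (- a - a*exp t) \<le> exp (- (2*a) * cosh t)" by simp
  hence "exp (- a - a*exp t) * (exp (nu*t) / 2) \<le> exp (- (2*a) * cosh t) * cosh (nu * t)"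
    using c1 by (intro mult_mono) auto
  moreover have "exp (-a) / 2 * exp (nu*t - a*exp t) = exp (- a - a*exp t) * (exp (nu*t) / 2)"
    by (simp add: exp_diff exp_minus field_simps flip: exp_add)
  ultimately show ?thesis by simp
qed

lemma K_lower:
  fixes nu z :: real
  assumes nu: "nu \<ge> 1" and z: "z > 0" and T: "z/2 \<le> nu"
  defines "a \<equiv> z/2"
  defines "W \<equiv> \<lambda>t. exp (nu*t - a*exp t)"
  defines "T \<equiv> ln (nu / a)"
  shows "exp (-a) / 2 * (2 * W T / sqrt nu - W 0 / (nu - a + sqrt nu)
           - W (T+2) / (a * exp (T+2) - nu + sqrt nu)) \<le> besselK nu z"
proof -
  have a: "a > 0" using z by (simp add: a_def)
  have T0: "T \<ge> 0" using T a unfolding T_def a_def by simp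
  have aT: "a * exp T = nu" using a nu unfolding T_def by simp
  define f where "f = (\<lambda>t. exp (- z * cosh t) * cosh (nu * t))"
  have fint: "f integrable_on {0..}" unfolding f_def using z nu by (intro integrand_integrable) auto
  have cf: "continuous_on {0..T+2} f" unfolding f_def by (intro continuous_intros)
  have fint2: "f integrable_on {0..T+2}" using cf integrable_continuous_real by blast
  have "integral {0..T+2} f \<le> integral {0..} f"
    by (rule integral_subset_le) (use fint fint2 in \<open>auto simp: f_def\<close>)
  also have "\<dots> = besselK nu z" unfolding besselK_def f_def ..
  finally have K1: "integral {0..T+2} f \<le> besselK nu z" .
  have cW: "continuous_on {0..T+2} W" unfolding W_def by (intro continuous_intros)
  have Wint: "W integrable_on {0..T+2}" using cW integrable_continuous_real by blast
  have "integral {0..T+2} (\<lambda>t. exp (-a) / 2 * W t) \<le> integral {0..T+2} f"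
  proof (rule integral_le)
    show "(\<lambda>t. exp (-a) / 2 * W t) integrable_on {0..T+2}" using Wint by (rule integrable_on_mult_right)
    show "f integrable_on {0..T+2}" by (rule fint2)
    show "\<And>x. x \<in> {0..T+2} \<Longrightarrow> exp (-a) / 2 * W x \<le> f x"
      unfolding W_def f_def using pointwise_lower[OF a] nu unfolding a_def by auto
  qed
  hence K2: "exp (-a) / 2 * integral {0..T+2} W \<le> besselK nu z" using K1 by simp
  have split: "integral {0..T} W + integral {T..T+2} W = integral {0..T+2} W"
    by (rule Henstock_Kurzweil_Integration.integral_combine[OF T0 _ Wint]) simp
  have L: "W T / sqrt nu - W 0 / (nu - a + sqrt nu) \<le> integral {0..T} W"
    unfolding W_def by (rule left_part[OF nu a T0 aT])
  have R: "W T / sqrt nu - W (T+2) / (a * exp (T+2) - nu + sqrt nu) \<le> integral {T..T+2} W"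
    unfolding W_def by (rule right_part[OF nu a _ aT]) simp
  have "2 * W T / sqrt nu - W 0 / (nu - a + sqrt nu) - W (T+2) / (a * exp (T+2) - nu + sqrt nu)
        \<le> integral {0..T+2} W" using L R split by simp
  hence "exp (-a) / 2 * (2 * W T / sqrt nu - W 0 / (nu - a + sqrt nu)
           - W (T+2) / (a * exp (T+2) - nu + sqrt nu)) \<le> exp (-a) / 2 * integral {0..T+2} W"
    by (intro mult_left_mono) auto
  thus ?thesis using K2 by linarith
qed
lemma exp_quarter_lb: "exp (1/4::real) \<ge> 41/32"
  using exp_lower_Taylor_quadratic[of "1/4::real"] by (simp add: power2_eq_square)

lemma e_lb: "exp (1::real) \<ge> 269/100"
proof -
  have "(269/100::real) \<le> (41/32)^4" by (simp add: eval_nat_numeral)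
  also have "\<dots> \<le> exp (1/4) ^ 4"
    using exp_quarter_lb by (intro power_mono) auto
  also have "\<dots> = exp (1::real)" by (simp flip: exp_of_nat_mult)
  finally show ?thesis .
qed

lemma exp_half_lb: "exp (1/2::real) \<ge> 16416/10000"
proof -
  have "(16416/10000::real) \<le> (41/32)^2" by (simp add: eval_nat_numeral)
  also have "\<dots> \<le> exp (1/4) ^ 2"
    using exp_quarter_lb by (intro power_mono) auto
  also have "\<dots> = exp (1/2::real)" by (simp flip: exp_of_nat_mult)
  finally show ?thesis .
qed

lemma exp4_lb: "exp (4::real) \<ge> 50"
proof -
  have "(50::real) \<le> (269/100)^4" by (simp add: eval_nat_numeral)
  also have "\<dots> \<le> exp 1 ^ 4"
    using e_lb by (intro power_mono) auto
  also have "\<dots> = exp (4::real)" by (simp flip: exp_of_nat_mult)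
  finally show ?thesis .
qed

lemma pi_half_bound: "ln pi \<le> ln 2 + 2 * ln (98/100::real) + 1/2"
proof -
  have p1: "pi \<le> 315/100" by (rule order_trans[OF pi_approx(2)]) simp
  have "pi \<le> 2 * (9604/10000) * exp (1/2::real)"
    using p1 exp_half_lb by linarith
  hence "ln pi \<le> ln (2 * (9604/10000) * exp (1/2::real))" by simp
  also have "\<dots> = ln (2 * (9604/10000)) + ln (exp (1/2::real))" by (rule ln_mult_pos) auto
  also have "ln (2 * (9604/10000::real)) = ln 2 + ln ((98/100) * (98/100))" by (subst ln_mult_pos) auto
  also have "ln ((98/100) * (98/100)::real) = 2 * ln (98/100)" by (subst ln_mult_pos) auto
  finally show ?thesis by simp
qed
definition gfun :: "real \<Rightarrow> real \<Rightarrow> real" where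
  "gfun nu z = exp (1/2 * ln (pi / (z * exp 1)) - z + (nu - 1/2) * ln (2*(nu-1/2) / (z * exp 1)))"

lemma g_bound:
  fixes nu z :: real
  assumes nu: "nu \<ge> 1" and z: "z > 0"
  shows "gfun nu z \<le> (98/100) * exp (- z) * exp (nu * ln (nu / (z/2)) - nu) / sqrt nu"
proof -
  define m where "m = nu - 1/2"
  have m0: "m > 0" using nu by (simp add: m_def)
  have numm: "nu = m + 1/2" by (simp add: m_def)
  have l1: "ln (pi / (z * exp 1)) = ln pi - ln z - 1"
    using z by (simp add: ln_div ln_mult)
  have l2: "ln (2*m / (z * exp 1)) = ln 2 + ln m - ln z - 1"
    using z m0 by (simp add: ln_div ln_mult)
  have l3: "ln (nu / (z/2)) = ln nu - ln z + ln 2"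
    using z nu by (simp add: ln_div ln_mult)
  have sq: "sqrt nu = exp (1/2 * ln nu)"
    using nu powr_half_sqrt[of nu] by (simp add: powr_def)
  have "ln (m / nu) \<le> m / nu - 1" using m0 nu by (intro ln_le_minus_one) auto
  hence "ln m - ln nu \<le> m / nu - 1" using m0 nu by (simp add: ln_div)
  hence "m * (ln m - ln nu) \<le> m * (m / nu - 1)" using m0 by (simp add: mult_left_mono)
  moreover have "m * (m / nu - 1) \<le> - 1/4"
    using nu unfolding numm by (simp add: field_simps)
  ultimately have key: "m * ln nu - m * ln m \<ge> 1/4" by (simp add: algebra_simps)
  have pb: "ln pi \<le> ln 2 + 2 * ln (98/100::real) + 1/2" by (rule pi_half_bound)
  define A where "A = 1/2 * ln (pi / (z * exp 1)) - z + (nu - 1/2) * ln (2*(nu-1/2) / (z * exp 1))"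
  define R where "R = ln (98/100) - z + (nu * ln (nu / (z/2)) - nu) - 1/2 * ln nu"
  have eA: "A = 1/2*ln pi - 1/2 - 1/2*ln z - z + m*ln 2 + m*ln m - m*ln z - m"
    unfolding A_def l1 m_def[symmetric] l2 by (simp add: algebra_simps)
  have eR: "R = ln (98/100) - z + m*ln nu - m*ln z - 1/2*ln z + m*ln 2 + 1/2*ln 2 - m - 1/2"
  proof -
    have "R = ln (98/100) - z + nu * (ln nu - ln z + ln 2) - nu - 1/2 * ln nu"
      unfolding R_def l3 by simp
    also have "\<dots> = ln (98/100) - z + m*ln nu - m*ln z - 1/2*ln z + m*ln 2 + 1/2*ln 2 - m - 1/2"
      by (simp add: numm algebra_simps)
    finally show ?thesis .
  qed
  have "A \<le> R" unfolding eA eR using key pb by linarith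
  hence "exp A \<le> exp R" by simp
  moreover have "exp R = (98/100) * exp (- z) * exp (nu * ln (nu / (z/2)) - nu) / sqrt nu"
  proof -
    have "exp R = exp (ln (98/100) + (- z) + (nu * ln (nu / (z/2)) - nu) - 1/2 * ln nu)"
      unfolding R_def by (simp add: algebra_simps)
    also have "\<dots> = exp (ln (98/100)) * exp (- z) * exp (nu * ln (nu / (z/2)) - nu) / exp (1/2 * ln nu)"
      by (simp only: exp_diff exp_add)
    also have "\<dots> = (98/100) * exp (- z) * exp (nu * ln (nu / (z/2)) - nu) / sqrt nu"
      unfolding sq by simp
    finally show ?thesis .
  qed
  ultimately show ?thesis unfolding gfun_def A_def[symmetric] by simp
qed
lemma core:
  fixes nu z :: real
  assumes nu: "nu \<ge> 1" and z: "z > 0" and zc: "exp 1 * z < 2*(nu - 1/2)"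
  shows "gfun nu z < besselK nu z"
proof -
  define a where "a = z/2"
  define T where "T = ln (nu/a)"
  define s where "s = sqrt nu"
  define E where "E = exp (nu*T - nu)"
  define e2 where "e2 = exp (2::real)"
  define eps where "eps = exp (nu * (3 - e2))"
  define D where "D = nu - a + s"
  have a0: "a > 0" using z by (simp add: a_def)
  have s1: "s \<ge> 1" using nu by (simp add: s_def)
  have ss: "s * s = nu" using nu by (simp add: s_def)
  have snu: "s \<le> nu"
  proof -
    have "s * 1 \<le> s * s" using s1 by (intro mult_left_mono) auto
    thus ?thesis using ss by simp
  qed
  have eub: "exp (1::real) < 272/100" by (rule e_less_272)
  have elb: "exp (1::real) \<ge> 269/100" by (rule e_lb)
  have ae: "exp 1 * a < nu" using zc unfolding a_def by simp
  have zle: "z/2 \<le> nu"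
  proof -
    have "1 * a \<le> exp 1 * a" using a0 elb by (intro mult_right_mono) auto
    thus ?thesis using ae unfolding a_def by simp
  qed
  have aT: "a * exp T = nu" using a0 nu unfolding T_def by simp
  have KL0: "exp (-a)/2 * (2 * exp (nu*T - a*exp T) / sqrt nu - exp (nu*0 - a*exp 0) / (nu - a + sqrt nu)
      - exp (nu*(T+2) - a*exp (T+2)) / (a*exp (T+2) - nu + sqrt nu)) \<le> besselK nu z"
    using K_lower[OF nu z zle] unfolding a_def T_def by simp
  have w1: "exp (nu*T - a*exp T) = E" unfolding E_def aT ..
  have w0: "exp (nu*0 - a*exp 0) = exp (-a)" by simp
  have d2: "a*exp (T+2) = nu*e2" unfolding e2_def exp_add using aT by (simp add: mult.assoc[symmetric])
  have w2: "exp (nu*(T+2) - a*exp (T+2)) = E * eps"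
    unfolding d2 E_def eps_def by (simp flip: exp_add add: algebra_simps)
  have KL: "exp (-a)/2 * (2 * E / s - exp (-a) / D - E * eps / (nu*e2 - nu + s)) \<le> besselK nu z"
    using KL0 unfolding w1 w0 w2 unfolding d2 s_def[symmetric] D_def[symmetric] .
  have e2lb: "e2 \<ge> 7"
  proof -
    have "(7::real) \<le> (269/100) * (269/100)" by simp
    also have "\<dots> \<le> exp 1 * exp 1" using elb by (intro mult_mono) auto
    also have "\<dots> = e2" unfolding e2_def by (simp flip: exp_add)
    finally show ?thesis .
  qed
  have "nu * (3 - e2) \<le> -4"
  proof -
    have "nu * (3 - e2) \<le> 1 * (3 - e2)" using nu e2lb by (intro mult_right_mono_neg) auto
    moreover have "1 * (3 - e2) \<le> -4" using e2lb by simp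
    ultimately show ?thesis by (rule order_trans)
  qed
  hence "eps \<le> exp (-4)" unfolding eps_def by simp
  also have "exp (-4::real) = 1 / exp 4" by (simp add: exp_minus field_simps)
  also have "\<dots> \<le> 1/50" using exp4_lb by (intro divide_left_mono) auto
  finally have eps50: "eps \<le> 1/50" .
  have eps0: "eps > 0" unfolding eps_def by simp
  have E0: "E > 0" unfolding E_def by simp
  have den: "nu*e2 - nu + s \<ge> s"
  proof -
    have "nu * 1 \<le> nu * e2" using nu e2lb by (intro mult_left_mono) auto
    thus ?thesis by simp
  qed
  have tau: "E * eps / (nu*e2 - nu + s) \<le> (E/s) / 50"
  proof -
    have "E * eps / (nu*e2 - nu + s) \<le> E * eps / s"
      using den s1 E0 eps0 by (intro divide_left_mono) auto
    also have "\<dots> \<le> E * (1/50) / s"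
      using eps50 E0 s1 by (intro divide_right_mono mult_left_mono) auto
    finally show ?thesis by simp
  qed
  have gb: "gfun nu z \<le> (98/100) * (exp (-a) * exp (-a)) * (E / s)"
  proof -
    have "gfun nu z \<le> (98/100) * exp (- z) * exp (nu * ln (nu / (z/2)) - nu) / sqrt nu"
      by (rule g_bound[OF nu z])
    also have "exp (nu * ln (nu / (z/2)) - nu) = E" unfolding E_def T_def a_def ..
    also have "exp (- z) = exp (-a) * exp (-a)" unfolding a_def by (simp flip: exp_add)
    finally show ?thesis unfolding s_def by simp
  qed
  have T1: "T \<ge> 1"
  proof -
    have "exp 1 \<le> nu / a" using ae a0 by (simp add: field_simps)
    hence "ln (exp 1) \<le> ln (nu / a)" using a0 nu by (subst ln_le_cancel_iff) auto
    thus ?thesis unfolding T_def by simp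
  qed
  have EL: "E \<ge> nu / (exp 1 * a)"
  proof -
    have "1 * (T - 1) \<le> nu * (T - 1)" using nu T1 by (intro mult_right_mono) auto
    hence "exp (T - 1) \<le> E" unfolding E_def by (simp add: algebra_simps)
    moreover have "exp (T - 1) = nu / (exp 1 * a)"
      unfolding T_def using a0 nu by (simp add: exp_diff)
    ultimately show ?thesis by simp
  qed
  have Dlb: "D \<ge> 1628/1000"
  proof -
    have "a < nu / exp 1" using ae by (simp add: field_simps)
    also have "\<dots> \<le> nu / (269/100)" using elb nu by (intro divide_left_mono) auto
    finally have "a < nu * (100/269)" by simp
    thus ?thesis unfolding D_def using s1 nu by linarith
  qed
  have D0: "D > 0" using Dlb by simp
  define x where "x = exp (-a)"
  define y where "y = E / s"
  have x0: "x > 0" and x1: "x \<le> 1" using a0 by (auto simp: x_def)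
  have y0: "y > 0" using E0 s1 by (simp add: y_def)
  have xa: "exp a * x = 1" unfolding x_def by (simp flip: exp_add)
  have ea1: "exp a \<ge> 1 + a" by (rule exp_ge_add_one_self)
  have h2: "exp 1 * a < 2 * D * (99/100 * exp a - 98/100)"
  proof -
    have pos: "99/100 * exp a - 98/100 \<ge> 1/100 + 99/100 * a" using ea1 by linarith
    have "2 * (1628/1000) * (1/100 + 99/100 * a) \<le> 2 * D * (99/100 * exp a - 98/100)"
      using Dlb pos a0 by (intro mult_mono) auto
    moreover have "exp 1 * a < 2 * (1628/1000) * (1/100 + 99/100 * a)"
    proof -
      have "exp 1 * a \<le> (272/100) * a" using eub a0 by (intro mult_right_mono) auto
      moreover have "2 * (1628/1000) * (1/100 + 99/100 * a) = 3256/100000 + 322344/100000 * (a::real)"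
        by (simp add: algebra_simps)
      ultimately show ?thesis using a0 by linarith
    qed
    ultimately show ?thesis by linarith
  qed
  have h2': "exp 1 * a * x < 2 * D * (99/100 - 98/100 * x)"
  proof -
    have "exp 1 * a * x < 2 * D * (99/100 * exp a - 98/100) * x" using h2 x0 by simp
    also have "\<dots> = 2 * D * (99/100 - 98/100 * x)" using xa by (simp add: algebra_simps)
    finally show ?thesis .
  qed
  have h3: "y \<ge> 1 / (exp 1 * a)"
  proof -
    have "E / s \<ge> E / nu" using snu s1 E0 by (intro divide_left_mono) auto
    moreover have "E / nu \<ge> 1 / (exp 1 * a)" using EL nu a0 by (simp add: field_simps)
    ultimately show ?thesis unfolding y_def by linarith
  qed
  have cpos: "99/100 - 98/100 * x > 0" using x1 by simp
  have h4: "x / (2 * D) < y * (99/100 - 98/100 * x)"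
  proof -
    have "x / (2 * D) < (99/100 - 98/100 * x) / (exp 1 * a)"
      using h2' D0 a0 x0 by (simp add: field_simps)
    also have "\<dots> = (1 / (exp 1 * a)) * (99/100 - 98/100 * x)" by simp
    also have "\<dots> \<le> y * (99/100 - 98/100 * x)" using h3 cpos by (intro mult_right_mono) auto
    finally show ?thesis .
  qed
  have h5: "(98/100) * (x * x) * y < x/2 * (2 * y - x / D - y / 50)"
  proof -
    have "x * (x / (2 * D)) < x * (y * (99/100 - 98/100 * x))" by (rule mult_strict_left_mono[OF h4 x0])
    thus ?thesis using D0 by (simp add: field_simps)
  qed
  have h6: "x/2 * (2 * y - x / D - y / 50) \<le> exp (-a)/2 * (2 * E / s - exp (-a) / D - E * eps / (nu*e2 - nu + s))"
  proof -
    have "2 * y - x / D - y / 50 \<le> 2 * E / s - exp (-a) / D - E * eps / (nu*e2 - nu + s)"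
      using tau unfolding x_def y_def by simp
    thus ?thesis using x0 unfolding x_def by (intro mult_left_mono) auto
  qed
  show ?thesis using gb h5 h6 KL unfolding x_def y_def by linarith
qed
lemma lambert_pos:
  fixes x :: real
  assumes x: "x > 0"
  shows "lambertW0 x > 0 \<and> lambertW0 x * exp (lambertW0 x) = x"
proof -
  have "\<exists>w\<ge>0. w \<le> x \<and> w * exp w = x"
  proof (rule IVT)
    show "0 * exp 0 \<le> x" using x by simp
    have "x * 1 \<le> x * exp x" using x by (intro mult_left_mono) auto
    thus "x \<le> x * exp x" by simp
    show "0 \<le> x" using x by simp
    show "\<forall>y. 0 \<le> y \<and> y \<le> x \<longrightarrow> isCont (\<lambda>w. w * exp w) y" by (auto intro!: continuous_intros)
  qed
  then obtain w0 where w0: "w0 \<ge> 0" "w0 * exp w0 = x" by blast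
  have pos: "w > 0" if "w * exp w = x" for w :: real
  proof (rule ccontr)
    assume "\<not> w > 0"
    hence "w * exp w \<le> 0" by (simp add: mult_nonpos_nonneg)
    thus False using that x by simp
  qed
  have mono: "w1 * exp w1 < w2 * exp w2" if "0 < w1" "w1 < w2" for w1 w2 :: real
    using that by (intro mult_strict_mono) auto
  have ex1: "\<exists>!w. w \<ge> -1 \<and> w * exp w = x"
  proof (rule ex1I[of _ w0])
    show "w0 \<ge> -1 \<and> w0 * exp w0 = x" using w0 by simp
    fix w assume w: "w \<ge> -1 \<and> w * exp w = x"
    have p1: "w > 0" "w0 > 0" using pos w w0 by auto
    show "w = w0"
    proof (rule ccontr)
      assume "w \<noteq> w0"
      hence "w < w0 \<or> w0 < w" by linarith
      thus False using mono[of w w0] mono[of w0 w] p1 w w0 by auto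
    qed
  qed
  have "lambertW0 x = w0" unfolding lambertW0_def
    by (rule the1_equality[OF ex1]) (use w0 in simp)
  thus ?thesis using pos w0 by auto
qed

lemma gfun_mono:
  fixes nu z z0 :: real
  assumes nu: "nu \<ge> 1" and z: "z > 0" and zz: "z \<le> z0"
  shows "gfun nu z0 \<le> gfun nu z"
proof -
  have m0: "nu - 1/2 > 0" using nu by simp
  have e0: "exp 1 > (0::real)" by simp
  have l1: "ln (pi / (z0 * exp 1)) \<le> ln (pi / (z * exp 1))"
    using z zz by (subst ln_le_cancel_iff) (auto intro!: divide_left_mono mult_right_mono mult_pos_pos)
  have l2: "ln (2*(nu-1/2) / (z0 * exp 1)) \<le> ln (2*(nu-1/2) / (z * exp 1))"
    using z zz m0 by (subst ln_le_cancel_iff) (auto intro!: divide_left_mono mult_right_mono mult_pos_pos)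
  have "(nu - 1/2) * ln (2*(nu-1/2) / (z0 * exp 1)) \<le> (nu - 1/2) * ln (2*(nu-1/2) / (z * exp 1))"
    using l2 m0 by (intro mult_left_mono) auto
  thus ?thesis unfolding gfun_def using l1 zz by simp
qed

theorem proposition1:
  fixes B z nu z0 :: real
  assumes "B > 0" and "z > 0"
    and "z0 = max z (pi / (B^2 * exp 1))"
    and "nu \<ge> 1"
    and "nu \<ge> 1/2 + (ln B + z0 - 1/2 * ln (pi / (z0 * exp 1))) /
           lambertW0 (2 / (z0 * exp 1) * (ln B + z0 - 1/2 * ln (pi / (z0 * exp 1))))"
  shows "besselK nu z > B"
proof -
  note B = assms(1) and z = assms(2) and z0d = assms(3) and nu = assms(4) and hyp = assms(5)
  define L where "L = ln B + z0 - 1/2 * ln (pi / (z0 * exp 1))"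
  define m where "m = nu - 1/2"
  have zz: "z \<le> z0" using z0d by simp
  have z0: "z0 > 0" using zz z by simp
  have zB: "pi / (B^2 * exp 1) \<le> z0" using z0d by simp
  have "pi \<le> z0 * (B^2 * exp 1)" using zB B by (simp add: divide_le_eq)
  hence "pi / (z0 * exp 1) \<le> B^2" using z0 by (simp add: divide_le_eq algebra_simps)
  hence "ln (pi / (z0 * exp 1)) \<le> ln (B^2)" using z0 B by (subst ln_le_cancel_iff) auto
  also have "ln (B^2) = 2 * ln B" using B by (simp add: ln_realpow)
  finally have "L \<ge> z0" unfolding L_def by simp
  hence L0: "L > 0" using z0 by simp
  define x where "x = 2 / (z0 * exp 1) * L"
  have x0: "x > 0" using L0 z0 by (simp add: x_def)
  define w where "w = lambertW0 x"
  have w0: "w > 0" and wx: "w * exp w = x" using lambert_pos[OF x0] by (auto simp: w_def)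
  have mge: "m \<ge> L / w" using hyp unfolding m_def L_def[symmetric] x_def[symmetric] w_def[symmetric] by simp
  have ew: "exp w = 2 * (L / w) / (z0 * exp 1)"
    using wx w0 z0 unfolding x_def by (simp add: field_simps)
  have "2 * (L / w) / (z0 * exp 1) \<le> 2 * m / (z0 * exp 1)"
    using mge z0 by (intro divide_right_mono) auto
  hence ewm: "exp w \<le> 2 * m / (z0 * exp 1)" using ew by simp
  have ew1: "exp w > 1" using w0 by simp
  have m0: "m > 0" using nu by (simp add: m_def)
  have lnw: "w \<le> ln (2 * m / (z0 * exp 1))"
  proof -
    have pp: "0 < 2 * m / (z0 * exp 1)" using ewm exp_gt_zero[of w] by linarith
    have "ln (exp w) \<le> ln (2 * m / (z0 * exp 1))" using ewm pp by (subst ln_le_cancel_iff) auto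
    thus ?thesis by simp
  qed
  have mL: "m * ln (2 * m / (z0 * exp 1)) \<ge> L"
  proof -
    have "L = (L / w) * w" using w0 by simp
    also have "\<dots> \<le> m * w" using mge w0 by (intro mult_right_mono) auto
    also have "\<dots> \<le> m * ln (2 * m / (z0 * exp 1))" using lnw m0 by (intro mult_left_mono) auto
    finally show ?thesis .
  qed
  have cz0: "exp 1 * z0 < 2 * m"
  proof -
    have "2 * m / (z0 * exp 1) > 1" using ewm ew1 by linarith
    thus ?thesis using z0 by (simp add: field_simps)
  qed
  have gz0: "B \<le> gfun nu z0"
  proof -
    have "ln B \<le> 1/2 * ln (pi / (z0 * exp 1)) - z0 + m * ln (2 * m / (z0 * exp 1))"
      using mL unfolding L_def by simp
    hence "exp (ln B) \<le> gfun nu z0" unfolding gfun_def m_def by simp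
    thus ?thesis using B by simp
  qed
  have czz: "exp 1 * z < 2 * (nu - 1/2)"
  proof -
    have "exp 1 * z \<le> exp 1 * z0" using zz by simp
    thus ?thesis using cz0 unfolding m_def by linarith
  qed
  have "gfun nu z < besselK nu z" by (rule core[OF nu z czz])
  moreover have "gfun nu z0 \<le> gfun nu z" by (rule gfun_mono[OF nu z zz])
  ultimately show ?thesis using gz0 by simp
qed

end
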